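(* Let $\Phi:[a,b]\to\mathbb{R}$ be nowhere zero, fix $x_0\in[a,b]$ and $n\ge1$, and assume $\Phi$ and $f$ are such that all functions below are $n$ times differentiable in $x$. Then $D^{(n)}f(x)=\sum_{k=1}^n a_k(x)f^{(k)}(x)$ and $\widetilde D^{(n)}f(x)=\sum_{k=1}^n\widetilde a_k(x)f^{(k)}(x)$, where, for $1\le k\le n$, letting $1\le i_1<\dots<i_{n-1}\le n$ be the elements of $\{1,\dots,n\}\setminus\{k\}$, $\varepsilon=\varepsilon_{i_1,\dots,i_{n-1},k}$ the sign of the permutation $(i_1,\dots,i_{n-1},k)$ of $(1,\dots,n)$, $M(x)$ the $(n-1)\times(n-1)$ matrix with entries $M_{r,j}=\mathcal Y_j^{(i_r)}(x_0,x)$ and $\widetilde M(x)$ the one with entries $\widetilde M_{r,j}=\widetilde{\mathcal Y}_j^{(i_r)}(x_0,x)$ ($1\le r,j\le n-1$, superscripts denoting ordinary derivatives in $x$): $$a_k(x)=\begin{cases}\varepsilon\,\dfrac{[\Phi(x)]^{\frac{n+1}{2}}}{\alpha_{n-1}}\det\widetilde M(x), & n\text{ odd},\\[2ex] \varepsilon\,\dfrac{1}{\alpha_{n-1}[\Phi(x)]^{\frac n2}}\det M(x), & n\text{ even},\end{cases}\qquad \widetilde a_k(x)=\begin{cases}\varepsilon\,\dfrac{1}{\alpha_{n-1}[\Phi(x)]^{\frac{n+1}{2}}}\det M(x), & n\text{ odd},\\[2ex] \varepsilon\,\dfrac{[\Phi(x)]^{\frac n2}}{\alpha_{n-1}}\det\widetilde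 M(x), & n\text{ even},\end{cases}$$ with $\alpha_{n-1}=\prod_{j=0}^{n-1}j!$.
   Context: For $x_0,x\in[a,b]$ the $\Phi$-power functions are defined recursively by $X^{(0)}(x_0,x)\equiv 1$, $\widetilde X^{(0)}(x_0,x)\equiv 1$ and, for $n\ge 1$, $$X^{(n)}(x_0,x)=n\int_{x_0}^x X^{(n-1)}(x_0,\xi)\,\big(\Phi(\xi)\big)^{(-1)^n}\,d\xi,\qquad \widetilde X^{(n)}(x_0,x)=n\int_{x_0}^x \widetilde X^{(n-1)}(x_0,\xi)\,\Big(\frac{1}{\Phi(\xi)}\Big)^{(-1)^n}\,d\xi.$$ For $n\ge0$, $\mathcal Y_n=\widetilde X^{(n)}$ if $n$ is odd and $\mathcal Y_n=X^{(n)}$ if $n$ is even; $\widetilde{\mathcal Y}_n=X^{(n)}$ if $n$ is odd and $\widetilde{\mathcal Y}_n=\widetilde X^{(n)}$ if $n$ is even. The $\Phi$-derivatives are $Dh=\Phi\,h'$, $\widetilde Dh=\frac1\Phi h'$, with $D^{(0)}h=\widetilde D^{(0)}h=h$, $D^{(k)}h=D(\widetilde D^{(k-1)}h)$, $\widetilde D^{(k)}h=\widetilde D(D^{(k-1)}h)$ for $k\ge1$. In this part of the paper $\Phi$ is assumed real-valued. *)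

theory Defs
  imports "HOL-Analysis.Analysis" "HOL-Combinatorics.Permutations" "Jordan_Normal_Form.Determinant"
begin

definition dw :: "real \<Rightarrow> real \<Rightarrow> (real \<Rightarrow> real) \<Rightarrow> real \<Rightarrow> real" where
  "dw a b h x = vector_derivative h (at x within {a..b})"

definition dn :: "real \<Rightarrow> real \<Rightarrow> nat \<Rightarrow> (real \<Rightarrow> real) \<Rightarrow> real \<Rightarrow> real" where
  "dn a b k h = (dw a b ^^ k) h"

definition ndiff :: "real \<Rightarrow> real \<Rightarrow> nat \<Rightarrow> (real \<Rightarrow> real) \<Rightarrow> bool" where
  "ndiff a b m h \<longleftrightarrow> (\<forall>k<m. \<forall>x\<in>{a..b}. (dn a b k h) differentiable (at x within {a..b}))"

fun PhiD :: "real \<Rightarrow> real \<Rightarrow> (real \<Rightarrow> real) \<Rightarrow> nat \<Rightarrow> (real \<Rightarrow> real) \<Rightarrow> real \<Rightarrow> real"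
and PhiDt :: "real \<Rightarrow> real \<Rightarrow> (real \<Rightarrow> real) \<Rightarrow> nat \<Rightarrow> (real \<Rightarrow> real) \<Rightarrow> real \<Rightarrow> real" where
  "PhiD a b \<Phi> 0 h = h"
| "PhiD a b \<Phi> (Suc k) h = (\<lambda>x. \<Phi> x * dw a b (PhiDt a b \<Phi> k h) x)"
| "PhiDt a b \<Phi> 0 h = h"
| "PhiDt a b \<Phi> (Suc k) h = (\<lambda>x. (1 / \<Phi> x) * dw a b (PhiD a b \<Phi> k h) x)"

text \<open>(\<Phi> \<xi>)^((-1)^n) is written out as \<Phi> \<xi> for even n and 1/\<Phi> \<xi> for odd n;
  the oriented integral from x0 to x is the interval Lebesgue integral.\<close>
fun Xp :: "(real \<Rightarrow> real) \<Rightarrow> nat \<Rightarrow> real \<Rightarrow> real \<Rightarrow> real" where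
  "Xp \<Phi> 0 x0 x = 1"
| "Xp \<Phi> (Suc m) x0 x = real (Suc m) *
     (LBINT \<xi>=ereal x0..ereal x. Xp \<Phi> m x0 \<xi> * (if even (Suc m) then \<Phi> \<xi> else 1 / \<Phi> \<xi>))"

fun Xpt :: "(real \<Rightarrow> real) \<Rightarrow> nat \<Rightarrow> real \<Rightarrow> real \<Rightarrow> real" where
  "Xpt \<Phi> 0 x0 x = 1"
| "Xpt \<Phi> (Suc m) x0 x = real (Suc m) *
     (LBINT \<xi>=ereal x0..ereal x. Xpt \<Phi> m x0 \<xi> * (if even (Suc m) then 1 / \<Phi> \<xi> else \<Phi> \<xi>))"

definition Yp :: "(real \<Rightarrow> real) \<Rightarrow> nat \<Rightarrow> real \<Rightarrow> real \<Rightarrow> real" where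
  "Yp \<Phi> m = (if odd m then Xpt \<Phi> m else Xp \<Phi> m)"

definition Ypt :: "(real \<Rightarrow> real) \<Rightarrow> nat \<Rightarrow> real \<Rightarrow> real \<Rightarrow> real" where
  "Ypt \<Phi> m = (if odd m then Xp \<Phi> m else Xpt \<Phi> m)"

definition alpha :: "nat \<Rightarrow> real" where
  "alpha m = (\<Prod>j=0..m. fact j)"

text \<open>i_r: the r-th smallest element (1 \<le> r \<le> n-1) of {1..n} - {k}\<close>
definition idx :: "nat \<Rightarrow> nat \<Rightarrow> nat \<Rightarrow> nat" where
  "idx n k r = sorted_list_of_set ({1..n} - {k}) ! (r - 1)"

text \<open>the permutation (i_1,...,i_{n-1},k) of (1,...,n), as a map on nat (identity outside {1..n})\<close>
definition perm_ik :: "nat \<Rightarrow> nat \<Rightarrow> nat \<Rightarrow> nat" where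
  "perm_ik n k r = (if 1 \<le> r \<and> r < n then idx n k r else if r = n then k else r)"

definition eps :: "nat \<Rightarrow> nat \<Rightarrow> real" where
  "eps n k = real_of_int (sign (perm_ik n k))"

text \<open>M and \<widetilde>M, with 0-based JNF indices: entry (r,j) is the (r+1,j+1) entry of the paper\<close>
definition Mmat :: "real \<Rightarrow> real \<Rightarrow> (real \<Rightarrow> real) \<Rightarrow> nat \<Rightarrow> nat \<Rightarrow> real \<Rightarrow> real \<Rightarrow> real mat" where
  "Mmat a b \<Phi> n k x0 x = mat (n - 1) (n - 1)
     (\<lambda>(r, j). dn a b (idx n k (r + 1)) (Yp \<Phi> (j + 1) x0) x)"

definition Mtmat :: "real \<Rightarrow> real \<Rightarrow> (real \<Rightarrow> real) \<Rightarrow> nat \<Rightarrow> nat \<Rightarrow> real \<Rightarrow> real \<Rightarrow> real mat" where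
  "Mtmat a b \<Phi> n k x0 x = mat (n - 1) (n - 1)
     (\<lambda>(r, j). dn a b (idx n k (r + 1)) (Ypt \<Phi> (j + 1) x0) x)"

definition acoef :: "real \<Rightarrow> real \<Rightarrow> (real \<Rightarrow> real) \<Rightarrow> nat \<Rightarrow> nat \<Rightarrow> real \<Rightarrow> real \<Rightarrow> real" where
  "acoef a b \<Phi> n k x0 x =
     (if odd n then eps n k * (\<Phi> x ^ ((n + 1) div 2) / alpha (n - 1)) * Determinant.det (Mtmat a b \<Phi> n k x0 x)
      else eps n k * (1 / (alpha (n - 1) * \<Phi> x ^ (n div 2))) * Determinant.det (Mmat a b \<Phi> n k x0 x))"

definition atcoef :: "real \<Rightarrow> real \<Rightarrow> (real \<Rightarrow> real) \<Rightarrow> nat \<Rightarrow> nat \<Rightarrow> real \<Rightarrow> real \<Rightarrow> real" where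
  "atcoef a b \<Phi> n k x0 x =
     (if odd n then eps n k * (1 / (alpha (n - 1) * \<Phi> x ^ ((n + 1) div 2))) * Determinant.det (Mmat a b \<Phi> n k x0 x)
      else eps n k * (\<Phi> x ^ (n div 2) / alpha (n - 1)) * Determinant.det (Mtmat a b \<Phi> n k x0 x))"

end

theory Submission
  imports Defs
begin


lemma idx_list: assumes "1 \<le> k" "k \<le> n"
  shows "sorted_list_of_set ({1..n} - {k}) = [1..<k] @ [Suc k..<Suc n]"
proof -
  have s: "{1..n} - {k} = set ([1..<k] @ [Suc k..<Suc n])" using assms by auto
  have "sorted ([1..<k] @ [Suc k..<Suc n])" by (auto simp: sorted_append)
  moreover have "distinct ([1..<k] @ [Suc k..<Suc n])" by auto
  ultimately show ?thesis unfolding s sorted_list_of_set_sort_remdups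
    by (simp add: distinct_remdups_id sorted_sort_id)
qed

lemma idx_val: assumes "1 \<le> k" "k \<le> n" "r < n - 1"
  shows "idx n k (Suc r) = (if r < k - 1 then Suc r else Suc (Suc r))"
  using assms unfolding idx_def idx_list[OF assms(1,2)]
  by (auto simp: nth_append)

lemma perm_ik_id: "perm_ik n n = id"
proof
  fix r show "perm_ik n n r = id r"
  proof (cases "1 \<le> r \<and> r < n")
    case True
    then have "n \<ge> 1" by auto
    have "idx n n (Suc (r - 1)) = Suc (r - 1)" using True idx_val[of n n "r - 1"] by auto
    then show ?thesis using True by (auto simp add: perm_ik_def)
  qed (auto simp: perm_ik_def)
qed

lemma perm_ik_Suc: assumes "1 \<le> k" "k \<le> n"
  shows "perm_ik (Suc n) k = perm_ik n k \<circ> Transposition.transpose n (Suc n)"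
proof
  fix r
  show "perm_ik (Suc n) k r = (perm_ik n k \<circ> Transposition.transpose n (Suc n)) r"
  proof -
    consider "r = 0" | "1 \<le> r \<and> r < n" | "r = n" | "r = Suc n" | "r > Suc n" by linarith
    then show ?thesis
    proof cases
      case 2
      then have "idx n k (Suc (r - 1)) = idx (Suc n) k (Suc (r - 1))"
        using assms idx_val[of k n "r-1"] idx_val[of k "Suc n" "r-1"] by auto
      then show ?thesis using 2 assms by (auto simp: perm_ik_def)
    next
      case 3
      then have "idx (Suc n) k (Suc (r - 1)) = Suc n"
        using assms idx_val[of k "Suc n" "r-1"] by auto
      then show ?thesis using 3 assms by (auto simp: perm_ik_def)
    qed (use assms in \<open>auto simp: perm_ik_def\<close>)
  qed
qed

lemma perm_ik_sign: assumes "1 \<le> k" "k \<le> n"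
  shows "permutation (perm_ik n k) \<and> sign (perm_ik n k) = (-1) ^ (n - k)"
proof -
  obtain d where n: "n = k + d" using assms(2) le_Suc_ex by blast
  have "permutation (perm_ik (k + d) k) \<and> sign (perm_ik (k + d) k) = (-1) ^ d"
  proof (induction d)
    case 0
    then show ?case by (simp add: perm_ik_id)
  next
    case (Suc d)
    have e: "perm_ik (k + Suc d) k = perm_ik (k + d) k \<circ> Transposition.transpose (k + d) (Suc (k + d))"
    proof -
      have s: "k + Suc d = Suc (k + d)" by simp
      show ?thesis unfolding s by (rule perm_ik_Suc[OF assms(1)]) simp
    qed
    have p: "permutation (perm_ik (k + d) k \<circ> Transposition.transpose (k + d) (Suc (k + d)))"
      by (rule permutation_compose[OF conjunct1[OF Suc.IH] permutation_swap_id])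
    have "sign (perm_ik (k + d) k \<circ> Transposition.transpose (k + d) (Suc (k + d))) = (-1)^d * (-1)"
    proof -
      have "sign (perm_ik (k + d) k \<circ> Transposition.transpose (k + d) (Suc (k + d)))
          = sign (perm_ik (k + d) k) * sign (Transposition.transpose (k + d) (Suc (k + d)))"
        using Suc.IH by (intro sign_compose permutation_swap_id) auto
      also have "\<dots> = (-1)^d * (-1)" using Suc.IH by (simp add: sign_swap_id)
      finally show ?thesis .
    qed
    then have "sign (perm_ik (k + d) k \<circ> Transposition.transpose (k + d) (Suc (k + d))) = (-1)^Suc d"
      by (simp only: power_Suc mult.commute)
    then show ?case unfolding e using p by (intro conjI)
  qed
  then show ?thesis using n by simp
qed

lemma eps_val: assumes "1 \<le> k" "k \<le> n" shows "eps n k = (-1) ^ (n - k)"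
  using perm_ik_sign[OF assms] by (simp add: eps_def)



lemma dn_0[simp]: "dn a b 0 h = h" by (simp add: dn_def)

lemma dn_Suc: "dn a b (Suc k) h = dn a b k (dw a b h)"
  by (simp only: dn_def funpow_Suc_right comp_apply)

lemma ndiff_Suc: "ndiff a b (Suc k) h \<longleftrightarrow>
   (\<forall>x\<in>{a..b}. h differentiable (at x within {a..b})) \<and> ndiff a b k (dw a b h)"
  unfolding ndiff_def by (auto simp: dn_Suc less_Suc_eq_0_disj)

lemma ndiff_0[simp]: "ndiff a b 0 h" by (simp add: ndiff_def)

lemma ndiff_mono: "ndiff a b k h \<Longrightarrow> j \<le> k \<Longrightarrow> ndiff a b j h"
  unfolding ndiff_def by auto

lemma ndiff_diffble: "ndiff a b (Suc k) h \<Longrightarrow> x \<in> {a..b} \<Longrightarrow> h differentiable (at x within {a..b})"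
  by (simp add: ndiff_Suc)

lemma dw_cong: "\<forall>y\<in>{a..b}. g y = h y \<Longrightarrow> x \<in> {a..b} \<Longrightarrow> dw a b g x = dw a b h x"
  unfolding dw_def by (rule vector_derivative_cong_eq) (auto intro: always_eventually)

lemma dn_cong: "\<forall>y\<in>{a..b}. g y = h y \<Longrightarrow> x \<in> {a..b} \<Longrightarrow> dn a b k g x = dn a b k h x"
proof (induction k arbitrary: g h x)
  case 0 then show ?case by simp
next
  case (Suc k)
  have "\<forall>y\<in>{a..b}. dw a b g y = dw a b h y" using Suc.prems dw_cong by blast
  then have "dn a b k (dw a b g) x = dn a b k (dw a b h) x" by (rule Suc.IH[OF _ Suc.prems(2)])
  then show ?case by (simp add: dn_Suc)
qed

lemma diffble_cong: fixes g h :: "real \<Rightarrow> real"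
  assumes e: "\<forall>y\<in>{a..b}. g y = h y" and x: "x \<in> {a..b}"
  shows "g differentiable (at x within {a..b}) \<longleftrightarrow> h differentiable (at x within {a..b})"
proof
  assume "g differentiable (at x within {a..b})"
  then show "h differentiable (at x within {a..b})"
    by (rule differentiable_transform_within[of g x "{a..b}" 1]) (use e x in auto)
next
  assume "h differentiable (at x within {a..b})"
  then show "g differentiable (at x within {a..b})"
    by (rule differentiable_transform_within[of h x "{a..b}" 1]) (use e x in auto)
qed

lemma ndiff_cong: "\<forall>y\<in>{a..b}. g y = h y \<Longrightarrow> ndiff a b k g \<longleftrightarrow> ndiff a b k h"
proof (induction k arbitrary: g h)
  case 0 then show ?case by simp
next
  case (Suc k)
  have "\<forall>y\<in>{a..b}. dw a b g y = dw a b h y" using Suc.prems dw_cong by blast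
  then have "ndiff a b k (dw a b g) \<longleftrightarrow> ndiff a b k (dw a b h)" by (rule Suc.IH)
  moreover have "(\<forall>x\<in>{a..b}. g differentiable (at x within {a..b})) \<longleftrightarrow>
     (\<forall>x\<in>{a..b}. h differentiable (at x within {a..b}))" using diffble_cong[OF Suc.prems] by blast
  ultimately show ?case by (simp add: ndiff_Suc)
qed

lemma ndiff_congI: "\<forall>y\<in>{a..b}. g y = h y \<Longrightarrow> ndiff a b k h \<Longrightarrow> ndiff a b k g"
  using ndiff_cong[of a b g h k] by simp

lemma dw_eq: "a < b \<Longrightarrow> x \<in> {a..b} \<Longrightarrow> (h has_real_derivative d) (at x within {a..b}) \<Longrightarrow> dw a b h x = d"
  unfolding dw_def has_real_derivative_iff_has_vector_derivative
  by (rule vector_derivative_within_closed_interval)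

lemma dw_works: "h differentiable (at x within {a..b}) \<Longrightarrow> (h has_real_derivative dw a b h x) (at x within {a..b})"
  unfolding dw_def has_real_derivative_iff_has_vector_derivative
  by (simp add: vector_derivative_works)

lemma dw_add: assumes "a < b" "x \<in> {a..b}" "g differentiable (at x within {a..b})" "h differentiable (at x within {a..b})"
  shows "dw a b (\<lambda>y. g y + h y) x = dw a b g x + dw a b h x"
  by (intro dw_eq assms DERIV_add dw_works)

lemma dw_mult: assumes "a < b" "x \<in> {a..b}" "g differentiable (at x within {a..b})" "h differentiable (at x within {a..b})"
  shows "dw a b (\<lambda>y. g y * h y) x = dw a b g x * h x + g x * dw a b h x"
proof -
  have "((\<lambda>y. g y * h y) has_real_derivative dw a b g x * h x + g x * dw a b h x) (at x within {a..b})"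
    using DERIV_mult[OF dw_works[OF assms(3)] dw_works[OF assms(4)]] by (simp add: mult.commute)
  then show ?thesis by (intro dw_eq assms)
qed

lemma dw_const: assumes "a < b" "x \<in> {a..b}" shows "dw a b (\<lambda>y. c) x = 0"
  by (intro dw_eq assms DERIV_const)

lemma dw_inverse: assumes "a < b" "x \<in> {a..b}" "g differentiable (at x within {a..b})" "g x \<noteq> 0"
  shows "dw a b (\<lambda>y. 1 / g y) x = - dw a b g x * (1 / g x) * (1 / g x)"
proof -
  have D: "((\<lambda>y. inverse (g y)) has_real_derivative (- (dw a b g x * inverse (g x ^ Suc (Suc 0))))) (at x within {a..b})"
    by (rule DERIV_inverse_fun[OF dw_works[OF assms(3)] assms(4)])
  have e1: "(\<lambda>y. inverse (g y)) = (\<lambda>y. 1 / g y)" by (simp add: inverse_eq_divide)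
  have e2: "- (dw a b g x * inverse (g x ^ Suc (Suc 0))) = - dw a b g x * (1 / g x) * (1 / g x)"
    by (simp add: divide_inverse inverse_mult_distrib mult.assoc)
  from D show ?thesis unfolding e1 e2 by (intro dw_eq assms)
qed

lemma ndiff_const: "ndiff a b k (\<lambda>y. c)"
proof (induction k arbitrary: c)
  case 0 then show ?case by simp
next
  case (Suc k)
  show ?case
  proof (cases "a < b")
    case True
    have "\<forall>y\<in>{a..b}. dw a b (\<lambda>y. c) y = 0" using dw_const[OF True] by blast
    then have "ndiff a b k (dw a b (\<lambda>y. c))" using ndiff_cong[of a b "dw a b (\<lambda>y. c)" "\<lambda>y. 0" k] Suc.IH[of 0] by blast
    then show ?thesis by (simp add: ndiff_Suc)
  next
    case False
    have "(\<lambda>y. c) differentiable (at x within {a..b})" for x by simp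
    moreover have "ndiff a b k (dw a b (\<lambda>y. c))"
    proof -
      have "\<forall>y\<in>{a..b}. y = a" using False by auto
      then have "\<forall>y\<in>{a..b}. dw a b (\<lambda>y. c) y = dw a b (\<lambda>y. c) a" by auto
      then show ?thesis using ndiff_cong[of a b "dw a b (\<lambda>y. c)" "\<lambda>y. dw a b (\<lambda>y. c) a" k] Suc.IH by blast
    qed
    ultimately show ?thesis by (simp add: ndiff_Suc)
  qed
qed



lemma ndiff_add: "a < b \<Longrightarrow> ndiff a b k g \<Longrightarrow> ndiff a b k h \<Longrightarrow> ndiff a b k (\<lambda>y. g y + h y)"
proof (induction k arbitrary: g h)
  case 0 then show ?case by simp
next
  case (Suc k)
  have d: "\<forall>x\<in>{a..b}. g differentiable (at x within {a..b}) \<and> h differentiable (at x within {a..b})"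
    using Suc.prems ndiff_diffble by blast
  then have "\<forall>y\<in>{a..b}. dw a b (\<lambda>y. g y + h y) y = dw a b g y + dw a b h y"
    using dw_add[OF Suc.prems(1)] by blast
  moreover have "ndiff a b k (\<lambda>y. dw a b g y + dw a b h y)"
  proof -
    have "ndiff a b k (dw a b g)" "ndiff a b k (dw a b h)" using Suc.prems(2,3) by (simp_all add: ndiff_Suc)
    then show ?thesis by (rule Suc.IH[OF Suc.prems(1)])
  qed
  ultimately have "ndiff a b k (dw a b (\<lambda>y. g y + h y))" by (rule ndiff_congI)
  then show ?case using d by (simp add: ndiff_Suc differentiable_add)
qed

lemma ndiff_mult: "a < b \<Longrightarrow> ndiff a b k g \<Longrightarrow> ndiff a b k h \<Longrightarrow> ndiff a b k (\<lambda>y. g y * h y)"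
proof (induction k arbitrary: g h)
  case 0 then show ?case by simp
next
  case (Suc k)
  have d: "\<forall>x\<in>{a..b}. g differentiable (at x within {a..b}) \<and> h differentiable (at x within {a..b})"
    using Suc.prems ndiff_diffble by blast
  then have "\<forall>y\<in>{a..b}. dw a b (\<lambda>y. g y * h y) y = dw a b g y * h y + g y * dw a b h y"
    using dw_mult[OF Suc.prems(1)] by blast
  moreover have "ndiff a b k (\<lambda>y. dw a b g y * h y + g y * dw a b h y)"
  proof (rule ndiff_add[OF Suc.prems(1)])
    have gk: "ndiff a b k g" and hk: "ndiff a b k h" using Suc.prems ndiff_mono le_SucI by blast+
    have dg: "ndiff a b k (dw a b g)" and dh: "ndiff a b k (dw a b h)" using Suc.prems(2,3) by (simp_all add: ndiff_Suc)
    show "ndiff a b k (\<lambda>y. dw a b g y * h y)" by (rule Suc.IH[OF Suc.prems(1) dg hk])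
    show "ndiff a b k (\<lambda>y. g y * dw a b h y)" by (rule Suc.IH[OF Suc.prems(1) gk dh])
  qed
  ultimately have "ndiff a b k (dw a b (\<lambda>y. g y * h y))" by (rule ndiff_congI)
  then show ?case using d by (simp add: ndiff_Suc differentiable_mult)
qed

lemma ndiff_cmult: "a < b \<Longrightarrow> ndiff a b k h \<Longrightarrow> ndiff a b k (\<lambda>y. c * h y)"
  using ndiff_mult[of a b k "\<lambda>y. c" h] ndiff_const by blast

lemma diffble_inverse: fixes g :: "real \<Rightarrow> real" assumes "g differentiable (at x within {a..b})" "g x \<noteq> 0"
  shows "(\<lambda>y. 1 / g y) differentiable (at x within {a..b})"
proof -
  have "((\<lambda>y. inverse (g y)) has_real_derivative (- (dw a b g x * inverse (g x ^ Suc (Suc 0))))) (at x within {a..b})"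
    by (rule DERIV_inverse_fun[OF dw_works[OF assms(1)] assms(2)])
  then have "(\<lambda>y. inverse (g y)) differentiable (at x within {a..b})"
    using real_differentiable_def by blast
  then show ?thesis by (simp add: divide_inverse)
qed

lemma ndiff_inverse: "a < b \<Longrightarrow> \<forall>x\<in>{a..b}. g x \<noteq> 0 \<Longrightarrow> ndiff a b k g \<Longrightarrow> ndiff a b k (\<lambda>y. 1 / g y)"
proof (induction k)
  case 0 then show ?case by simp
next
  case (Suc k)
  have d: "\<forall>x\<in>{a..b}. g differentiable (at x within {a..b})"
    using Suc.prems ndiff_diffble by blast
  then have "\<forall>y\<in>{a..b}. dw a b (\<lambda>y. 1 / g y) y = (- dw a b g y) * (1 / g y) * (1 / g y)"
    using dw_inverse[OF Suc.prems(1)] Suc.prems(2) by auto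
  moreover have "ndiff a b k (\<lambda>y. (- dw a b g y) * (1 / g y) * (1 / g y))"
  proof -
    have "ndiff a b k g" using Suc.prems ndiff_mono le_SucI by blast
    then have i: "ndiff a b k (\<lambda>y. 1 / g y)" by (rule Suc.IH[OF Suc.prems(1,2)])
    have "ndiff a b k (\<lambda>y. (-1) * dw a b g y)" using Suc.prems by (intro ndiff_cmult) (auto simp: ndiff_Suc)
    then have "ndiff a b k (\<lambda>y. (- dw a b g y))" by simp
    then show ?thesis using i Suc.prems(1) by (intro ndiff_mult) auto
  qed
  ultimately have "ndiff a b k (dw a b (\<lambda>y. 1 / g y))" by (rule ndiff_congI)
  then show ?case using d Suc.prems(2) by (simp add: ndiff_Suc diffble_inverse)
qed

lemma dn_add: "a < b \<Longrightarrow> ndiff a b k g \<Longrightarrow> ndiff a b k h \<Longrightarrow> x \<in> {a..b} \<Longrightarrow>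
    dn a b k (\<lambda>y. g y + h y) x = dn a b k g x + dn a b k h x"
proof (induction k arbitrary: g h x)
  case 0 then show ?case by simp
next
  case (Suc k)
  have d: "\<forall>x\<in>{a..b}. g differentiable (at x within {a..b}) \<and> h differentiable (at x within {a..b})"
    using Suc.prems ndiff_diffble by blast
  then have "\<forall>y\<in>{a..b}. dw a b (\<lambda>y. g y + h y) y = dw a b g y + dw a b h y"
    using dw_add[OF Suc.prems(1)] by blast
  then have "dn a b k (dw a b (\<lambda>y. g y + h y)) x = dn a b k (\<lambda>y. dw a b g y + dw a b h y) x"
    using Suc.prems(4) by (rule dn_cong)
  also have "\<dots> = dn a b k (dw a b g) x + dn a b k (dw a b h) x"
  proof -
    have "ndiff a b k (dw a b g)" "ndiff a b k (dw a b h)" using Suc.prems(2,3) by (simp_all add: ndiff_Suc)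
    then show ?thesis by (rule Suc.IH[OF Suc.prems(1) _ _ Suc.prems(4)])
  qed
  finally show ?case by (simp add: dn_Suc)
qed

lemma dn_cmult: "a < b \<Longrightarrow> ndiff a b k h \<Longrightarrow> x \<in> {a..b} \<Longrightarrow>
    dn a b k (\<lambda>y. c * h y) x = c * dn a b k h x"
proof (induction k arbitrary: h x)
  case 0 then show ?case by simp
next
  case (Suc k)
  have d: "\<forall>x\<in>{a..b}. h differentiable (at x within {a..b})"
    using Suc.prems ndiff_diffble by blast
  then have "\<forall>y\<in>{a..b}. dw a b (\<lambda>y. c * h y) y = c * dw a b h y"
    using dw_mult[OF Suc.prems(1), of _ "\<lambda>y. c" h] dw_const[OF Suc.prems(1)] by simp
  then have "dn a b k (dw a b (\<lambda>y. c * h y)) x = dn a b k (\<lambda>y. c * dw a b h y) x"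
    using Suc.prems(3) by (rule dn_cong)
  also have "\<dots> = c * dn a b k (dw a b h) x"
  proof -
    have "ndiff a b k (dw a b h)" using Suc.prems(2) by (simp add: ndiff_Suc)
    then show ?thesis by (rule Suc.IH[OF Suc.prems(1) _ Suc.prems(3)])
  qed
  finally show ?case by (simp add: dn_Suc)
qed

lemma dn_const: "a < b \<Longrightarrow> x \<in> {a..b} \<Longrightarrow> dn a b k (\<lambda>y. c) x = (if k = 0 then c else 0)"
proof (induction k arbitrary: c x)
  case 0 then show ?case by simp
next
  case (Suc k)
  have "\<forall>y\<in>{a..b}. dw a b (\<lambda>y. c) y = 0" using dw_const[OF Suc.prems(1)] by blast
  then have "dn a b k (dw a b (\<lambda>y. c)) x = dn a b k (\<lambda>y. 0) x" using Suc.prems(2) by (rule dn_cong)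
  then show ?case using Suc.IH[OF Suc.prems(1,2), of 0] by (simp add: dn_Suc)
qed

lemma leibniz_ex: "a < b \<Longrightarrow> ndiff a b i g \<Longrightarrow> x \<in> {a..b} \<Longrightarrow>
  \<exists>c. \<forall>h. ndiff a b i h \<longrightarrow> dn a b i (\<lambda>y. g y * h y) x = g x * dn a b i h x + (\<Sum>l<i. c l * dn a b l h x)"
proof (induction i arbitrary: g)
  case 0 then show ?case by simp
next
  case (Suc i)
  have gi: "ndiff a b i g" and dgi: "ndiff a b i (dw a b g)" using Suc.prems ndiff_mono le_SucI ndiff_Suc by blast+
  obtain c1 where c1: "\<forall>h. ndiff a b i h \<longrightarrow> dn a b i (\<lambda>y. g y * h y) x = g x * dn a b i h x + (\<Sum>l<i. c1 l * dn a b l h x)"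
    using Suc.IH[OF Suc.prems(1) gi Suc.prems(3)] by blast
  obtain c2 where c2: "\<forall>h. ndiff a b i h \<longrightarrow> dn a b i (\<lambda>y. dw a b g y * h y) x = dw a b g x * dn a b i h x + (\<Sum>l<i. c2 l * dn a b l h x)"
    using Suc.IH[OF Suc.prems(1) dgi Suc.prems(3)] by blast
  define c where "c l = (if l < i then c2 l else dw a b g x) + (if l = 0 then 0 else c1 (l - 1))" for l
  show ?case
  proof (intro exI allI impI)
    fix h assume h: "ndiff a b (Suc i) h"
    have hi: "ndiff a b i h" and dhi: "ndiff a b i (dw a b h)" using h ndiff_mono le_SucI ndiff_Suc by blast+
    have d: "\<forall>x\<in>{a..b}. g differentiable (at x within {a..b}) \<and> h differentiable (at x within {a..b})"
      using Suc.prems h ndiff_diffble by blast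
    then have "\<forall>y\<in>{a..b}. dw a b (\<lambda>y. g y * h y) y = dw a b g y * h y + g y * dw a b h y"
      using dw_mult[OF Suc.prems(1)] by blast
    then have "dn a b (Suc i) (\<lambda>y. g y * h y) x = dn a b i (\<lambda>y. dw a b g y * h y + g y * dw a b h y) x"
      unfolding dn_Suc using Suc.prems(3) by (rule dn_cong)
    also have "\<dots> = dn a b i (\<lambda>y. dw a b g y * h y) x + dn a b i (\<lambda>y. g y * dw a b h y) x"
      using Suc.prems hi dhi gi dgi by (intro dn_add ndiff_mult) auto
    also have "\<dots> = (dw a b g x * dn a b i h x + (\<Sum>l<i. c2 l * dn a b l h x))
       + (g x * dn a b (Suc i) h x + (\<Sum>l<i. c1 l * dn a b (Suc l) h x))"
      using c1 c2 hi dhi by (simp add: dn_Suc)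
    also have "\<dots> = g x * dn a b (Suc i) h x + (\<Sum>l<Suc i. c l * dn a b l h x)"
    proof -
      have "(\<Sum>l<Suc i. c l * dn a b l h x) = (\<Sum>l<Suc i. (if l < i then c2 l else dw a b g x) * dn a b l h x)
          + (\<Sum>l<Suc i. (if l = 0 then 0 else c1 (l - 1)) * dn a b l h x)"
        unfolding c_def by (simp add: distrib_right sum.distrib)
      also have "(\<Sum>l<Suc i. (if l < i then c2 l else dw a b g x) * dn a b l h x)
          = (\<Sum>l<i. c2 l * dn a b l h x) + dw a b g x * dn a b i h x"
        by (simp add: sum.lessThan_Suc)
      also have "(\<Sum>l<Suc i. (if l = 0 then 0 else c1 (l - 1)) * dn a b l h x)
          = (\<Sum>l<i. c1 l * dn a b (Suc l) h x)"
        by (simp only: sum.lessThan_Suc_shift) simp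
      finally show ?thesis by simp
    qed
    finally show "dn a b (Suc i) (\<lambda>y. g y * h y) x = g x * dn a b (Suc i) h x + (\<Sum>l<Suc i. c l * dn a b l h x)" .
  qed
qed



lemma ndiff_cont: "ndiff a b (Suc k) h \<Longrightarrow> continuous_on {a..b} h"
  using ndiff_diffble differentiable_imp_continuous_within continuous_on_eq_continuous_within by blast

lemma Yp_Suc: "Yp \<Phi> (Suc j) x0 x = real (Suc j) * (LBINT \<xi>=ereal x0..ereal x. Ypt \<Phi> j x0 \<xi> * \<Phi> \<xi>)"
  by (cases "even j") (auto simp: Yp_def Ypt_def)

lemma Ypt_Suc: "Ypt \<Phi> (Suc j) x0 x = real (Suc j) * (LBINT \<xi>=ereal x0..ereal x. Yp \<Phi> j x0 \<xi> * (1 / \<Phi> \<xi>))"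
  by (cases "even j") (auto simp: Yp_def Ypt_def)

lemma Yp_0: "Yp \<Phi> 0 x0 = (\<lambda>x. 1)" by (auto simp: Yp_def)
lemma Ypt_0: "Ypt \<Phi> 0 x0 = (\<lambda>x. 1)" by (auto simp: Ypt_def)

lemma dw_integral: assumes "a < b" "x0 \<in> {a..b}" "x \<in> {a..b}" "continuous_on {a..b} F"
  shows "dw a b (\<lambda>u. c * (LBINT \<xi>=ereal x0..ereal u. F \<xi>)) x = c * F x"
proof -
  have "((\<lambda>u. LBINT \<xi>=x0..u. F \<xi>) has_vector_derivative F x) (at x within {a..b})"
    using assms by (intro interval_integral_FTC2) auto
  then have "((\<lambda>u. LBINT \<xi>=x0..u. F \<xi>) has_real_derivative F x) (at x within {a..b})"
    by (simp add: has_real_derivative_iff_has_vector_derivative)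
  then have "((\<lambda>u. c * (LBINT \<xi>=x0..u. F \<xi>)) has_real_derivative c * F x) (at x within {a..b})"
    by (rule DERIV_cmult)
  then show ?thesis using assms by (intro dw_eq) auto
qed

lemma dw_Yp: assumes "a < b" "x0 \<in> {a..b}" "x \<in> {a..b}"
  "continuous_on {a..b} (Ypt \<Phi> j x0)" "continuous_on {a..b} \<Phi>"
  shows "dw a b (Yp \<Phi> (Suc j) x0) x = \<Phi> x * (real (Suc j) * Ypt \<Phi> j x0 x)"
proof -
  have "Yp \<Phi> (Suc j) x0 = (\<lambda>u. real (Suc j) * (LBINT \<xi>=ereal x0..ereal u. Ypt \<Phi> j x0 \<xi> * \<Phi> \<xi>))"
    by (rule ext) (rule Yp_Suc)
  moreover have "continuous_on {a..b} (\<lambda>\<xi>. Ypt \<Phi> j x0 \<xi> * \<Phi> \<xi>)"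
    using assms by (intro continuous_intros)
  ultimately show ?thesis using dw_integral[OF assms(1-3)] by simp
qed

lemma dw_Ypt: assumes "a < b" "x0 \<in> {a..b}" "x \<in> {a..b}"
  "continuous_on {a..b} (Yp \<Phi> j x0)" "continuous_on {a..b} (\<lambda>y. 1 / \<Phi> y)"
  shows "dw a b (Ypt \<Phi> (Suc j) x0) x = (1 / \<Phi> x) * (real (Suc j) * Yp \<Phi> j x0 x)"
proof -
  have "Ypt \<Phi> (Suc j) x0 = (\<lambda>u. real (Suc j) * (LBINT \<xi>=ereal x0..ereal u. Yp \<Phi> j x0 \<xi> * (1 / \<Phi> \<xi>)))"
    by (rule ext) (rule Ypt_Suc)
  moreover have "continuous_on {a..b} (\<lambda>\<xi>. Yp \<Phi> j x0 \<xi> * (1 / \<Phi> \<xi>))"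
    using continuous_on_mult[OF assms(4,5)] .
  ultimately show ?thesis using dw_integral[OF assms(1-3)] by simp
qed

lemma PhiD_reg: assumes "a < b" "\<forall>x\<in>{a..b}. \<Phi> x \<noteq> 0" "ndiff a b n \<Phi>" "ndiff a b n f"
  shows "k \<le> n \<Longrightarrow> ndiff a b (n - k) (PhiD a b \<Phi> k f) \<and> ndiff a b (n - k) (PhiDt a b \<Phi> k f)"
proof (induction k)
  case 0 then show ?case using assms by simp
next
  case (Suc k)
  then have "ndiff a b (Suc (n - Suc k)) (PhiD a b \<Phi> k f)" "ndiff a b (Suc (n - Suc k)) (PhiDt a b \<Phi> k f)"
    by (simp_all add: Suc_diff_Suc)
  then have d: "ndiff a b (n - Suc k) (dw a b (PhiD a b \<Phi> k f))" "ndiff a b (n - Suc k) (dw a b (PhiDt a b \<Phi> k f))"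
    by (simp_all add: ndiff_Suc)
  have p: "ndiff a b (n - Suc k) \<Phi>" using assms(3) ndiff_mono by (metis diff_le_self)
  have q: "ndiff a b (n - Suc k) (\<lambda>y. 1 / \<Phi> y)" using ndiff_inverse[OF assms(1,2) p] .
  show ?case using ndiff_mult[OF assms(1) p d(2)] ndiff_mult[OF assms(1) q d(1)] by simp
qed

lemma dw_PhiD: "\<Phi> x \<noteq> 0 \<Longrightarrow> dw a b (PhiD a b \<Phi> k f) x = \<Phi> x * PhiDt a b \<Phi> (Suc k) f x"
  by simp
lemma dw_PhiDt: "\<Phi> x \<noteq> 0 \<Longrightarrow> dw a b (PhiDt a b \<Phi> k f) x = (1 / \<Phi> x) * PhiD a b \<Phi> (Suc k) f x"
  by simp



definition Vmat :: "real \<Rightarrow> real \<Rightarrow> nat \<Rightarrow> (nat \<Rightarrow> real \<Rightarrow> real) \<Rightarrow> (real \<Rightarrow> real) \<Rightarrow> real \<Rightarrow> real mat" where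
  "Vmat a b m Z F x = Matrix.mat m m (\<lambda>(r, j). dn a b (Suc r) (if j < m - 1 then Z (Suc j) else F) x)"

lemma prod_shift2: "(\<Prod>i = 0..<Suc p. if i < p then real (Suc (Suc i)) else 1) = fact (Suc p)"
proof -
  have "(\<Prod>i = 0..<Suc p. if i < p then real (Suc (Suc i)) else 1) = (\<Prod>i = 0..<p. real (Suc (Suc i)))"
    by (simp add: prod.atLeast0_lessThan_Suc)
  also have "\<dots> = fact (Suc p)"
    by (induction p) (simp_all add: prod.atLeast0_lessThan_Suc)
  finally show ?thesis .
qed

lemma Vmat_step:
  fixes g G F :: "real \<Rightarrow> real" and Z Z' :: "nat \<Rightarrow> real \<Rightarrow> real"
  assumes ab: "a < b" and x: "x \<in> {a..b}" and m: "m \<ge> 2"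
    and g: "ndiff a b (m - 1) g"
    and Zd: "\<forall>j<m - 1. \<forall>y\<in>{a..b}. dw a b (Z (Suc j)) y = g y * (real (Suc j) * Z' j y)"
    and Z0: "\<forall>y\<in>{a..b}. Z' 0 y = 1"
    and Zr: "\<forall>j<m - 1. ndiff a b (m - 1) (Z' j)"
    and Fd: "\<forall>y\<in>{a..b}. dw a b F y = g y * G y"
    and Gr: "ndiff a b (m - 1) G"
  shows "Determinant.det (Vmat a b m Z F x) = fact (m - 1) * g x ^ m * Determinant.det (Vmat a b (m - 1) Z' G x)"
proof -
  define H where "H j = (if j < m - 1 then (\<lambda>y. real (Suc j) * Z' j y) else G)" for j
  have Hr: "ndiff a b (m - 1) (H j)" if "j < m" for j
    using Zr Gr ab by (auto simp: H_def intro: ndiff_cmult)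
  have Hd: "\<forall>y\<in>{a..b}. dw a b (if j < m - 1 then Z (Suc j) else F) y = g y * H j y" if "j < m" for j
    using Zd Fd by (auto simp: H_def)
  define A where "A = Matrix.mat m m (\<lambda>(r, j). dn a b r (\<lambda>y. g y * H j y) x)"
  have VA: "Vmat a b m Z F x = A"
  proof (rule eq_matI)
    fix r j assume rj: "r < dim_row A" "j < dim_col A"
    then have "dn a b r (dw a b (if j < m - 1 then Z (Suc j) else F)) x = dn a b r (\<lambda>y. g y * H j y) x"
      using Hd[of j] x by (intro dn_cong) (auto simp: A_def)
    then show "Vmat a b m Z F x $$ (r, j) = A $$ (r, j)" using rj
      by (simp add: A_def Vmat_def dn_Suc)
  qed (auto simp: A_def Vmat_def)
  have "\<forall>r. \<exists>c. r < m \<longrightarrow> (\<forall>h. ndiff a b r h \<longrightarrow> dn a b r (\<lambda>y. g y * h y) x = g x * dn a b r h x + (\<Sum>l<r. c l * dn a b l h x))"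
  proof (intro allI)
    fix r
    show "\<exists>c. r < m \<longrightarrow> (\<forall>h. ndiff a b r h \<longrightarrow> dn a b r (\<lambda>y. g y * h y) x = g x * dn a b r h x + (\<Sum>l<r. c l * dn a b l h x))"
    proof (cases "r < m")
      case True
      then have "ndiff a b r g" using g ndiff_mono by (metis Suc_pred' less_Suc_eq_le not_less0 not_less_iff_gr_or_eq)
      then show ?thesis using leibniz_ex[OF ab _ x] by blast
    qed simp
  qed
  then obtain C where C: "\<And>r h. r < m \<Longrightarrow> ndiff a b r h \<Longrightarrow> dn a b r (\<lambda>y. g y * h y) x = g x * dn a b r h x + (\<Sum>l<r. C r l * dn a b l h x)"
    by metis
  define L where "L = Matrix.mat m m (\<lambda>(r, l). if l < r then C r l else if l = r then g x else 0)"
  define B where "B = Matrix.mat m m (\<lambda>(l, j). dn a b l (H j) x)"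
  have LB: "A = L * B"
  proof (rule eq_matI)
    fix r j assume rj: "r < dim_row (L * B)" "j < dim_col (L * B)"
    then have r: "r < m" and j: "j < m" by (auto simp: L_def B_def)
    have "(L * B) $$ (r, j) = (\<Sum>l = 0..<m. L $$ (r, l) * B $$ (l, j))"
      using r j by (simp add: L_def B_def scalar_prod_def)
    also have "\<dots> = (\<Sum>l = 0..<m. (if l < r then C r l * dn a b l (H j) x else if l = r then g x * dn a b r (H j) x else 0))"
      by (rule sum.cong) (use r j in \<open>auto simp: L_def B_def\<close>)
    also have "\<dots> = (\<Sum>l = 0..<Suc r. (if l < r then C r l * dn a b l (H j) x else if l = r then g x * dn a b r (H j) x else 0))"
      using r by (intro sum.mono_neutral_right) auto
    also have "\<dots> = g x * dn a b r (H j) x + (\<Sum>l<r. C r l * dn a b l (H j) x)"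
      by (simp add: prod.atLeast0_lessThan_Suc atLeast0LessThan[symmetric])
    also have "\<dots> = dn a b r (\<lambda>y. g y * H j y) x"
    proof -
      have "ndiff a b r (H j)" using Hr[OF j] ndiff_mono r by (metis Suc_pred' less_Suc_eq_le not_less0 not_less_iff_gr_or_eq)
      then show ?thesis using C[OF r] by simp
    qed
    finally show "A $$ (r, j) = (L * B) $$ (r, j)" using r j by (simp add: A_def)
  qed (auto simp: A_def L_def B_def)
  have Lc: "L \<in> carrier_mat m m" and Bc: "B \<in> carrier_mat m m" by (auto simp: L_def B_def)
  have detL: "Determinant.det L = g x ^ m"
  proof -
    have "Determinant.det L = prod_list (diag_mat L)"
      by (rule det_lower_triangular[OF _ Lc]) (auto simp: L_def)
    also have "\<dots> = (\<Prod>i = 0..<m. g x)" unfolding prod_list_diag_prod by (rule prod.cong) (auto simp: L_def)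
    finally show ?thesis by simp
  qed
  have m0: "0 < m" using m by simp
  have detB: "Determinant.det B = Determinant.det (mat_delete B 0 0)"
  proof -
    have "Determinant.det B = (\<Sum>i<m. B $$ (i, 0) * cofactor B i 0)"
      by (rule laplace_expansion_column[OF Bc m0])
    also have "\<dots> = (\<Sum>i<m. (if i = 0 then cofactor B 0 0 else 0))"
    proof (rule sum.cong)
      fix i assume i: "i \<in> {..<m}"
      have "\<forall>y\<in>{a..b}. H 0 y = 1" using Z0 m by (auto simp: H_def)
      then have "dn a b i (H 0) x = dn a b i (\<lambda>y. 1) x" using x by (rule dn_cong)
      also have "\<dots> = (if i = 0 then 1 else 0)" using dn_const[OF ab x] by simp
      finally show "B $$ (i, 0) * cofactor B i 0 = (if i = 0 then cofactor B 0 0 else 0)"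
        using i m0 by (auto simp: B_def)
    qed simp
    also have "\<dots> = cofactor B 0 0" using m0 by simp
    finally show ?thesis by (simp add: cofactor_def)
  qed
  define D where "D = Matrix.mat (m - 1) (m - 1) (\<lambda>(i, j). if i = j then (if j < m - 2 then real (Suc (Suc j)) else 1) else 0)"
  have Dc: "D \<in> carrier_mat (m - 1) (m - 1)" by (simp add: D_def)
  have V'c: "Vmat a b (m - 1) Z' G x \<in> carrier_mat (m - 1) (m - 1)" by (simp add: Vmat_def)
  have BD: "mat_delete B 0 0 = Vmat a b (m - 1) Z' G x * D"
  proof (rule eq_matI)
    fix r j assume rj: "r < dim_row (Vmat a b (m - 1) Z' G x * D)" "j < dim_col (Vmat a b (m - 1) Z' G x * D)"
    then have r: "r < m - 1" and j: "j < m - 1" by (auto simp: Vmat_def D_def)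
    let ?d = "(if j < m - 2 then real (Suc (Suc j)) else 1)"
    have "(Vmat a b (m - 1) Z' G x * D) $$ (r, j) = (\<Sum>l = 0..<m - 1. Vmat a b (m - 1) Z' G x $$ (r, l) * D $$ (l, j))"
      using r j by (simp add: Vmat_def D_def scalar_prod_def)
    also have "\<dots> = (\<Sum>l = 0..<m - 1. if l = j then Vmat a b (m - 1) Z' G x $$ (r, j) * ?d else 0)"
      by (rule sum.cong) (use r j in \<open>auto simp: D_def Vmat_def\<close>)
    also have "\<dots> = Vmat a b (m - 1) Z' G x $$ (r, j) * ?d" using j by simp
    also have "\<dots> = dn a b (Suc r) (H (Suc j)) x"
    proof (cases "j < m - 2")
      case True
      then have "Suc j < m - 1" by simp
      then have "ndiff a b (Suc r) (Z' (Suc j))" using Zr r ndiff_mono by (metis Suc_leI)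
      then have "dn a b (Suc r) (\<lambda>y. real (Suc (Suc j)) * Z' (Suc j) y) x = real (Suc (Suc j)) * dn a b (Suc r) (Z' (Suc j)) x"
        using ab x by (intro dn_cmult) auto
      moreover have "j < m - 1 - 1" "Suc j < m - 1" using True by auto
      ultimately show ?thesis using r j by (simp add: Vmat_def H_def)
    next
      case False
      then have "j = m - 2" using j by simp
      moreover have "\<not> j < m - 1 - 1" "\<not> Suc j < m - 1" using False by auto
      ultimately show ?thesis using r j by (simp add: Vmat_def H_def)
    qed
    also have "\<dots> = mat_delete B 0 0 $$ (r, j)" using r j by (simp add: mat_delete_def B_def)
    finally show "mat_delete B 0 0 $$ (r, j) = (Vmat a b (m - 1) Z' G x * D) $$ (r, j)" by simp
  qed (auto simp: mat_delete_def B_def Vmat_def D_def)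
  have detD: "Determinant.det D = fact (m - 1)"
  proof -
    obtain p where p: "m = Suc (Suc p)" using m by (metis add_2_eq_Suc le_Suc_ex)
    have "Determinant.det D = prod_list (diag_mat D)"
      by (rule det_lower_triangular[OF _ Dc]) (auto simp: D_def)
    also have "\<dots> = (\<Prod>i = 0..<Suc p. if i < p then real (Suc (Suc i)) else 1)"
      unfolding prod_list_diag_prod by (rule prod.cong) (auto simp: D_def p)
    also have "\<dots> = fact (m - 1)" using prod_shift2 p by simp
    finally show ?thesis .
  qed
  have "Determinant.det (Vmat a b m Z F x) = Determinant.det L * Determinant.det B"
    unfolding VA LB by (rule det_mult[OF Lc Bc])
  also have "\<dots> = g x ^ m * (Determinant.det (Vmat a b (m - 1) Z' G x) * fact (m - 1))"
    unfolding detL detB BD det_mult[OF V'c Dc] detD ..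
  finally show ?thesis by simp
qed



definition eY :: "nat \<Rightarrow> nat" where "eY m = (if even m then m div 2 + 1 else m div 2)"

lemma eY_Suc: "eY (Suc m) + eY m = Suc m"
  by (auto simp: eY_def elim!: evenE oddE)

lemma alpha_Suc: "alpha (Suc m) = fact (Suc m) * alpha m"
  by (simp add: alpha_def prod.atLeast0_atMost_Suc)

lemma alpha_pos: "alpha m > 0"
  by (simp add: alpha_def prod_pos)

lemma Vmat_1: "Determinant.det (Vmat a b (Suc 0) Z F x) = dw a b F x"
  by (subst det_single) (auto simp: Vmat_def dn_Suc)

lemma rec_main:
  assumes ab: "a < b" and nz: "\<forall>x\<in>{a..b}. \<Phi> x \<noteq> 0" and x0: "x0 \<in> {a..b}"
    and Phr: "ndiff a b n \<Phi>" and fr: "ndiff a b n f"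
    and Yr: "\<forall>j<n. ndiff a b n (Yp \<Phi> j x0) \<and> ndiff a b n (Ypt \<Phi> j x0)"
    and m: "1 \<le> m"
  shows "\<forall>k x. k + m \<le> n \<longrightarrow> x \<in> {a..b} \<longrightarrow>
     Determinant.det (Vmat a b m (\<lambda>j. Yp \<Phi> j x0) (PhiD a b \<Phi> k f) x)
        = alpha (m - 1) * \<Phi> x ^ eY m * dw a b (if odd m then PhiD a b \<Phi> (k + m - 1) f else PhiDt a b \<Phi> (k + m - 1) f) x
   \<and> \<Phi> x ^ eY m * Determinant.det (Vmat a b m (\<lambda>j. Ypt \<Phi> j x0) (PhiDt a b \<Phi> k f) x)
        = alpha (m - 1) * dw a b (if odd m then PhiDt a b \<Phi> (k + m - 1) f else PhiD a b \<Phi> (k + m - 1) f) x"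
  using m
proof (induction m rule: nat_induct_at_least)
  case base
  then show ?case by (simp add: Vmat_1 eY_def alpha_def)
next
  case (Suc m)
  show ?case
  proof (intro allI impI)
    fix k x assume km: "k + Suc m \<le> n" and x: "x \<in> {a..b}"
    have n1: "n = Suc (n - 1)" using km by simp
    have Phc: "continuous_on {a..b} \<Phi>" using Phr n1 ndiff_cont by metis
    have iPhr: "ndiff a b n (\<lambda>y. 1 / \<Phi> y)" using ndiff_inverse[OF ab nz Phr] .
    have iPhc: "continuous_on {a..b} (\<lambda>y. 1 / \<Phi> y)" using iPhr n1 ndiff_cont by metis
    have Yc: "continuous_on {a..b} (Yp \<Phi> j x0)" "continuous_on {a..b} (Ypt \<Phi> j x0)" if "j < n" for j
      using Yr that n1 ndiff_cont by metis+
    have mn: "Suc m - 1 \<le> n" using km by simp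
    have reg1: "ndiff a b (n - Suc k) (PhiD a b \<Phi> (Suc k) f)" "ndiff a b (n - Suc k) (PhiDt a b \<Phi> (Suc k) f)"
      using PhiD_reg[OF ab nz Phr fr, of "Suc k"] km by auto
    have IHb: "Determinant.det (Vmat a b m (\<lambda>j. Yp \<Phi> j x0) (PhiD a b \<Phi> (Suc k) f) x)
        = alpha (m - 1) * \<Phi> x ^ eY m * dw a b (if odd m then PhiD a b \<Phi> (Suc k + m - 1) f else PhiDt a b \<Phi> (Suc k + m - 1) f) x
      \<and> \<Phi> x ^ eY m * Determinant.det (Vmat a b m (\<lambda>j. Ypt \<Phi> j x0) (PhiDt a b \<Phi> (Suc k) f) x)
        = alpha (m - 1) * dw a b (if odd m then PhiDt a b \<Phi> (Suc k + m - 1) f else PhiD a b \<Phi> (Suc k + m - 1) f) x"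
      by (rule Suc.IH[rule_format]) (use km x in auto)
    note IH = IHb[THEN conjunct1] IHb[THEN conjunct2]
    have e1: "Suc k + m - 1 = k + Suc m - 1" by simp
    have am: "alpha (Suc m - 1) = fact m * alpha (m - 1)" using Suc.hyps alpha_Suc[of "m - 1"] by simp
    have Phx: "\<Phi> x \<noteq> 0" using nz x by blast
    have ifs: "\<And>A B :: real \<Rightarrow> real. (if odd (Suc m) then A else B) = (if odd m then B else A)" by simp
    have S1: "Determinant.det (Vmat a b (Suc m) (\<lambda>j. Yp \<Phi> j x0) (PhiD a b \<Phi> k f) x)
       = fact (Suc m - 1) * \<Phi> x ^ Suc m * Determinant.det (Vmat a b (Suc m - 1) (\<lambda>j. Ypt \<Phi> j x0) (PhiDt a b \<Phi> (Suc k) f) x)"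
    proof (rule Vmat_step[OF ab x])
      show "2 \<le> Suc m" using Suc.hyps by simp
      show "ndiff a b (Suc m - 1) \<Phi>" using Phr mn ndiff_mono by blast
      show "\<forall>j<Suc m - 1. \<forall>y\<in>{a..b}. dw a b (Yp \<Phi> (Suc j) x0) y = \<Phi> y * (real (Suc j) * Ypt \<Phi> j x0 y)"
      proof (intro allI impI ballI)
        fix j y assume j: "j < Suc m - 1" and y: "y \<in> {a..b}"
        have jn: "j < n" using j km by simp
        show "dw a b (Yp \<Phi> (Suc j) x0) y = \<Phi> y * (real (Suc j) * Ypt \<Phi> j x0 y)"
          using dw_Yp[OF ab x0 y Yc(2)[OF jn] Phc] .
      qed
      show "\<forall>y\<in>{a..b}. Ypt \<Phi> 0 x0 y = 1" by (simp add: Ypt_0)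
      show "\<forall>j<Suc m - 1. ndiff a b (Suc m - 1) (Ypt \<Phi> j x0)"
        using Yr km ndiff_mono by (metis add_lessD1 diff_Suc_1 less_eq_Suc_le order.trans less_imp_le_nat le_add2 add_Suc_right)
      show "\<forall>y\<in>{a..b}. dw a b (PhiD a b \<Phi> k f) y = \<Phi> y * PhiDt a b \<Phi> (Suc k) f y"
        using nz by simp
      show "ndiff a b (Suc m - 1) (PhiDt a b \<Phi> (Suc k) f)"
        using reg1(2) km ndiff_mono by (metis diff_Suc_1 add_Suc_right le_diff_conv2 add.commute Suc_le_lessD less_imp_le_nat le_add1 add_leD2)
    qed
    have S2: "Determinant.det (Vmat a b (Suc m) (\<lambda>j. Ypt \<Phi> j x0) (PhiDt a b \<Phi> k f) x)
       = fact (Suc m - 1) * (1 / \<Phi> x) ^ Suc m * Determinant.det (Vmat a b (Suc m - 1) (\<lambda>j. Yp \<Phi> j x0) (PhiD a b \<Phi> (Suc k) f) x)"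
    proof (rule Vmat_step[OF ab x])
      show "2 \<le> Suc m" using Suc.hyps by simp
      show "ndiff a b (Suc m - 1) (\<lambda>y. 1 / \<Phi> y)" using iPhr mn ndiff_mono by blast
      show "\<forall>j<Suc m - 1. \<forall>y\<in>{a..b}. dw a b (Ypt \<Phi> (Suc j) x0) y = 1 / \<Phi> y * (real (Suc j) * Yp \<Phi> j x0 y)"
      proof (intro allI impI ballI)
        fix j y assume j: "j < Suc m - 1" and y: "y \<in> {a..b}"
        have jn: "j < n" using j km by simp
        show "dw a b (Ypt \<Phi> (Suc j) x0) y = 1 / \<Phi> y * (real (Suc j) * Yp \<Phi> j x0 y)"
          using dw_Ypt[OF ab x0 y Yc(1)[OF jn] iPhc] .
      qed
      show "\<forall>y\<in>{a..b}. Yp \<Phi> 0 x0 y = 1" by (simp add: Yp_0)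
      show "\<forall>j<Suc m - 1. ndiff a b (Suc m - 1) (Yp \<Phi> j x0)"
        using Yr km ndiff_mono by (metis add_lessD1 diff_Suc_1 less_eq_Suc_le order.trans less_imp_le_nat le_add2 add_Suc_right)
      show "\<forall>y\<in>{a..b}. dw a b (PhiDt a b \<Phi> k f) y = 1 / \<Phi> y * PhiD a b \<Phi> (Suc k) f y"
        using nz by simp
      show "ndiff a b (Suc m - 1) (PhiD a b \<Phi> (Suc k) f)"
        using reg1(1) km ndiff_mono by (metis diff_Suc_1 add_Suc_right le_diff_conv2 add.commute Suc_le_lessD less_imp_le_nat le_add1 add_leD2)
    qed
    have pw: "\<Phi> x ^ Suc m = \<Phi> x ^ eY (Suc m) * \<Phi> x ^ eY m"
      by (simp add: eY_Suc flip: power_add)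
    show "Determinant.det (Vmat a b (Suc m) (\<lambda>j. Yp \<Phi> j x0) (PhiD a b \<Phi> k f) x)
        = alpha (Suc m - 1) * \<Phi> x ^ eY (Suc m) * dw a b (if odd (Suc m) then PhiD a b \<Phi> (k + Suc m - 1) f else PhiDt a b \<Phi> (k + Suc m - 1) f) x
     \<and> \<Phi> x ^ eY (Suc m) * Determinant.det (Vmat a b (Suc m) (\<lambda>j. Ypt \<Phi> j x0) (PhiDt a b \<Phi> k f) x)
        = alpha (Suc m - 1) * dw a b (if odd (Suc m) then PhiDt a b \<Phi> (k + Suc m - 1) f else PhiD a b \<Phi> (k + Suc m - 1) f) x"
    proof
      show "Determinant.det (Vmat a b (Suc m) (\<lambda>j. Yp \<Phi> j x0) (PhiD a b \<Phi> k f) x)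
        = alpha (Suc m - 1) * \<Phi> x ^ eY (Suc m) * dw a b (if odd (Suc m) then PhiD a b \<Phi> (k + Suc m - 1) f else PhiDt a b \<Phi> (k + Suc m - 1) f) x"
      proof -
        have "Determinant.det (Vmat a b (Suc m) (\<lambda>j. Yp \<Phi> j x0) (PhiD a b \<Phi> k f) x)
          = fact m * \<Phi> x ^ eY (Suc m) * (\<Phi> x ^ eY m * Determinant.det (Vmat a b m (\<lambda>j. Ypt \<Phi> j x0) (PhiDt a b \<Phi> (Suc k) f) x))"
          unfolding S1[unfolded diff_Suc_1] pw by (simp only: ac_simps)
        then show ?thesis unfolding IH(2)[unfolded e1] am ifs by (simp only: ac_simps)
      qed
      have "\<Phi> x ^ eY (Suc m) * (1 / \<Phi> x) ^ Suc m * \<Phi> x ^ eY m = 1"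
      proof -
        have "(1 / \<Phi> x) ^ Suc m = 1 / (\<Phi> x ^ eY (Suc m) * \<Phi> x ^ eY m)"
          unfolding power_one_over pw ..
        then show ?thesis using Phx by (simp add: field_simps)
      qed
      then show "\<Phi> x ^ eY (Suc m) * Determinant.det (Vmat a b (Suc m) (\<lambda>j. Ypt \<Phi> j x0) (PhiDt a b \<Phi> k f) x)
        = alpha (Suc m - 1) * dw a b (if odd (Suc m) then PhiDt a b \<Phi> (k + Suc m - 1) f else PhiD a b \<Phi> (k + Suc m - 1) f) x"
      proof -
        assume one: "\<Phi> x ^ eY (Suc m) * (1 / \<Phi> x) ^ Suc m * \<Phi> x ^ eY m = 1"
        have "\<Phi> x ^ eY (Suc m) * Determinant.det (Vmat a b (Suc m) (\<lambda>j. Ypt \<Phi> j x0) (PhiDt a b \<Phi> k f) x)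
          = fact m * alpha (m - 1) * dw a b (if odd m then PhiD a b \<Phi> (k + Suc m - 1) f else PhiDt a b \<Phi> (k + Suc m - 1) f) x
            * (\<Phi> x ^ eY (Suc m) * (1 / \<Phi> x) ^ Suc m * \<Phi> x ^ eY m)"
          unfolding S2[unfolded diff_Suc_1] IH(1)[unfolded e1] by (simp only: ac_simps)
        then show ?thesis unfolding one am ifs by simp
      qed
    qed
  qed
qed



lemma sign_parity: "i < n \<Longrightarrow> (-1::real) ^ (i + (n - 1)) = (-1) ^ (n - Suc i)"
proof -
  assume i: "i < n"
  then obtain d where d: "n - 1 = i + d" by (metis less_imp_Suc_add diff_Suc_1 add_Suc)
  then have "n - Suc i = d" by simp
  moreover have "(-1::real) ^ (i + (n - 1)) = (-1) ^ d"
    unfolding d by (simp add: power_add flip: mult_2 power_mult)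
  ultimately show ?thesis by simp
qed

lemma laplace_V:
  assumes n: "1 \<le> n"
  shows "Determinant.det (Vmat a b n Z F x) =
    (\<Sum>k=1..n. (-1) ^ (n - k) * Determinant.det (Matrix.mat (n - 1) (n - 1) (\<lambda>(r, j). dn a b (idx n k (r + 1)) (Z (j + 1)) x)) * dn a b k F x)"
proof -
  have Vc: "Vmat a b n Z F x \<in> carrier_mat n n" by (simp add: Vmat_def)
  have "Determinant.det (Vmat a b n Z F x) = (\<Sum>i<n. Vmat a b n Z F x $$ (i, n - 1) * cofactor (Vmat a b n Z F x) i (n - 1))"
    using n by (intro laplace_expansion_column[OF Vc]) auto
  also have "\<dots> = (\<Sum>i<n. (-1) ^ (n - Suc i) * Determinant.det (Matrix.mat (n - 1) (n - 1) (\<lambda>(r, j). dn a b (idx n (Suc i) (r + 1)) (Z (j + 1)) x)) * dn a b (Suc i) F x)"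
  proof (rule sum.cong)
    fix i assume i: "i \<in> {..<n}"
    have md: "mat_delete (Vmat a b n Z F x) i (n - 1) = Matrix.mat (n - 1) (n - 1) (\<lambda>(r, j). dn a b (idx n (Suc i) (r + 1)) (Z (j + 1)) x)"
    proof (rule eq_matI)
      fix r j assume "r < dim_row (Matrix.mat (n - 1) (n - 1) (\<lambda>(r, j). dn a b (idx n (Suc i) (r + 1)) (Z (j + 1)) x))"
        "j < dim_col (Matrix.mat (n - 1) (n - 1) (\<lambda>(r, j). dn a b (idx n (Suc i) (r + 1)) (Z (j + 1)) x))"
      then have r: "r < n - 1" and j: "j < n - 1" by auto
      have "idx n (Suc i) (Suc r) = (if r < i then Suc r else Suc (Suc r))"
        using idx_val[of "Suc i" n r] i r by auto
      then show "mat_delete (Vmat a b n Z F x) i (n - 1) $$ (r, j) = Matrix.mat (n - 1) (n - 1) (\<lambda>(r, j). dn a b (idx n (Suc i) (r + 1)) (Z (j + 1)) x) $$ (r, j)"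
        using r j i by (auto simp: mat_delete_def Vmat_def)
    qed (auto simp: mat_delete_def Vmat_def)
    have "Vmat a b n Z F x $$ (i, n - 1) = dn a b (Suc i) F x" using i by (simp add: Vmat_def)
    then show "Vmat a b n Z F x $$ (i, n - 1) * cofactor (Vmat a b n Z F x) i (n - 1) =
      (-1) ^ (n - Suc i) * Determinant.det (Matrix.mat (n - 1) (n - 1) (\<lambda>(r, j). dn a b (idx n (Suc i) (r + 1)) (Z (j + 1)) x)) * dn a b (Suc i) F x"
      unfolding cofactor_def md using sign_parity[of i n] i by simp
  qed simp
  also have "\<dots> = (\<Sum>k=1..n. (-1) ^ (n - k) * Determinant.det (Matrix.mat (n - 1) (n - 1) (\<lambda>(r, j). dn a b (idx n k (r + 1)) (Z (j + 1)) x)) * dn a b k F x)"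
    by (simp only: One_nat_def sum.atLeast1_atMost_eq)
  finally show ?thesis .
qed

theorem proposition4:
  fixes \<Phi> f :: "real \<Rightarrow> real" and a b x0 :: real and n :: nat
  assumes "a < b"
    and "\<forall>x\<in>{a..b}. \<Phi> x \<noteq> 0"
    and "x0 \<in> {a..b}"
    and "n \<ge> 1"
    and "ndiff a b n \<Phi>" and "ndiff a b n f"
    and "\<forall>j<n. ndiff a b n (Yp \<Phi> j x0) \<and> ndiff a b n (Ypt \<Phi> j x0)"
  shows "\<forall>x\<in>{a..b}.
           PhiD a b \<Phi> n f x = (\<Sum>k=1..n. acoef a b \<Phi> n k x0 x * dn a b k f x) \<and>
           PhiDt a b \<Phi> n f x = (\<Sum>k=1..n. atcoef a b \<Phi> n k x0 x * dn a b k f x)"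
proof
  fix x assume x: "x \<in> {a..b}"
  have R: "Determinant.det (Vmat a b n (\<lambda>j. Yp \<Phi> j x0) f x) = alpha (n - 1) * \<Phi> x ^ eY n * dw a b (if odd n then PhiD a b \<Phi> (n - 1) f else PhiDt a b \<Phi> (n - 1) f) x
    \<and> \<Phi> x ^ eY n * Determinant.det (Vmat a b n (\<lambda>j. Ypt \<Phi> j x0) f x) = alpha (n - 1) * dw a b (if odd n then PhiDt a b \<Phi> (n - 1) f else PhiD a b \<Phi> (n - 1) f) x"
    using rec_main[OF assms(1,2,3,5,6,7,4), rule_format, of 0 x] x by simp
  have Phx: "\<Phi> x \<noteq> 0" using assms(2) x by blast
  have al: "alpha (n - 1) \<noteq> 0" using alpha_pos[of "n - 1"] by simp
  have n1: "n = Suc (n - 1)" using assms(4) by simp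
  have PD: "PhiD a b \<Phi> n f x = \<Phi> x * dw a b (PhiDt a b \<Phi> (n - 1) f) x"
    by (subst n1) simp
  have PDt: "PhiDt a b \<Phi> n f x = (1 / \<Phi> x) * dw a b (PhiD a b \<Phi> (n - 1) f) x"
    by (subst n1) simp
  have VY: "Determinant.det (Vmat a b n (\<lambda>j. Yp \<Phi> j x0) f x) = (\<Sum>k=1..n. eps n k * Determinant.det (Mmat a b \<Phi> n k x0 x) * dn a b k f x)"
    unfolding laplace_V[OF assms(4)] Mmat_def
    by (rule sum.cong) (auto simp: eps_val)
  have VYt: "Determinant.det (Vmat a b n (\<lambda>j. Ypt \<Phi> j x0) f x) = (\<Sum>k=1..n. eps n k * Determinant.det (Mtmat a b \<Phi> n k x0 x) * dn a b k f x)"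
    unfolding laplace_V[OF assms(4)] Mtmat_def
    by (rule sum.cong) (auto simp: eps_val)
  show "PhiD a b \<Phi> n f x = (\<Sum>k=1..n. acoef a b \<Phi> n k x0 x * dn a b k f x) \<and>
        PhiDt a b \<Phi> n f x = (\<Sum>k=1..n. atcoef a b \<Phi> n k x0 x * dn a b k f x)"
  proof (cases "even n")
    case True
    have e: "eY n = n div 2 + 1" using True by (simp add: eY_def)
    have s1: "(\<Sum>k=1..n. acoef a b \<Phi> n k x0 x * dn a b k f x) = (1 / (alpha (n - 1) * \<Phi> x ^ (n div 2))) * Determinant.det (Vmat a b n (\<lambda>j. Yp \<Phi> j x0) f x)"
      unfolding VY sum_distrib_left using True by (intro sum.cong) (auto simp: acoef_def)
    have s2: "(\<Sum>k=1..n. atcoef a b \<Phi> n k x0 x * dn a b k f x) = (\<Phi> x ^ (n div 2) / alpha (n - 1)) * Determinant.det (Vmat a b n (\<lambda>j. Ypt \<Phi> j x0) f x)"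
      unfolding VYt sum_distrib_left using True by (intro sum.cong) (auto simp: atcoef_def)
    have R1: "Determinant.det (Vmat a b n (\<lambda>j. Yp \<Phi> j x0) f x) = alpha (n - 1) * \<Phi> x ^ (n div 2 + 1) * dw a b (PhiDt a b \<Phi> (n - 1) f) x"
      using R True e by simp
    have R2: "\<Phi> x ^ (n div 2 + 1) * Determinant.det (Vmat a b n (\<lambda>j. Ypt \<Phi> j x0) f x) = alpha (n - 1) * dw a b (PhiD a b \<Phi> (n - 1) f) x"
      using R True e by simp
    show ?thesis
    proof
      show "PhiD a b \<Phi> n f x = (\<Sum>k=1..n. acoef a b \<Phi> n k x0 x * dn a b k f x)"
        unfolding s1 R1 PD using Phx al by (simp add: field_simps)
      have "Determinant.det (Vmat a b n (\<lambda>j. Ypt \<Phi> j x0) f x) = alpha (n - 1) * dw a b (PhiD a b \<Phi> (n - 1) f) x / \<Phi> x ^ (n div 2 + 1)"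
        using R2 Phx by (simp add: field_simps)
      then show "PhiDt a b \<Phi> n f x = (\<Sum>k=1..n. atcoef a b \<Phi> n k x0 x * dn a b k f x)"
        unfolding s2 PDt using Phx al by (simp add: field_simps)
    qed
  next
    case False
    have e: "eY n = n div 2" using False by (simp add: eY_def)
    have h: "(n + 1) div 2 = n div 2 + 1" using False by presburger
    have s1: "(\<Sum>k=1..n. acoef a b \<Phi> n k x0 x * dn a b k f x) = (\<Phi> x ^ (n div 2 + 1) / alpha (n - 1)) * Determinant.det (Vmat a b n (\<lambda>j. Ypt \<Phi> j x0) f x)"
      unfolding VYt sum_distrib_left using False h by (intro sum.cong) (auto simp: acoef_def)
    have s2: "(\<Sum>k=1..n. atcoef a b \<Phi> n k x0 x * dn a b k f x) = (1 / (alpha (n - 1) * \<Phi> x ^ (n div 2 + 1))) * Determinant.det (Vmat a b n (\<lambda>j. Yp \<Phi> j x0) f x)"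
      unfolding VY sum_distrib_left using False h by (intro sum.cong) (auto simp: atcoef_def)
    have R1: "Determinant.det (Vmat a b n (\<lambda>j. Yp \<Phi> j x0) f x) = alpha (n - 1) * \<Phi> x ^ (n div 2) * dw a b (PhiD a b \<Phi> (n - 1) f) x"
      using R False e by simp
    have R2: "\<Phi> x ^ (n div 2) * Determinant.det (Vmat a b n (\<lambda>j. Ypt \<Phi> j x0) f x) = alpha (n - 1) * dw a b (PhiDt a b \<Phi> (n - 1) f) x"
      using R False e by simp
    show ?thesis
    proof
      have "Determinant.det (Vmat a b n (\<lambda>j. Ypt \<Phi> j x0) f x) = alpha (n - 1) * dw a b (PhiDt a b \<Phi> (n - 1) f) x / \<Phi> x ^ (n div 2)"
        using R2 Phx by (simp add: field_simps)
      then show "PhiD a b \<Phi> n f x = (\<Sum>k=1..n. acoef a b \<Phi> n k x0 x * dn a b k f x)"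
        unfolding s1 PD using Phx al by (simp add: field_simps)
      show "PhiDt a b \<Phi> n f x = (\<Sum>k=1..n. atcoef a b \<Phi> n k x0 x * dn a b k f x)"
        unfolding s2 R1 PDt using Phx al by (simp add: field_simps)
    qed
  qed
qed

end
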